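(* Assume Assumptions 1 and 2 and Assumption 3 hold, and that the propensity scores are fully known, i.e. $e_0(X)=e_X(X;\alpha^* )=e_W(X,W;\alpha^*,\gamma^* )$. Then $\Sigma^{\mathrm{fps}}_W(\delta^{\mathrm{fps}})\le\Sigma^{\mathrm{fps}}_X(\beta^{\mathrm{fps}})$.
   Context: Data: i.i.d. copies of $(Y,Z,X,W)$, binary treatment $Z$, covariates $X,W$, outcome $Y=ZY_1+(1-Z)Y_0$ with potential outcomes $Y_1,Y_0$; $\tau=E(Y_1-Y_0)$. Assumption 1: $Z\perp(Y_0,Y_1)\mid X$, $0<\Pr(Z=1\mid X)<1$. Assumption 2: $Z\perp(W,Y_0,Y_1)\mid X$. $e_0(X)=\Pr(Z=1\mid X)$ (which also equals $\Pr(Z=1\mid X,W)$). Propensity models $e_X(X;\alpha)$ and $e_W(X,W;\alpha,\gamma)$ with $e_W(X,W;\alpha,0)=e_X(X;\alpha)$. Outcome working models $Q_X(X,z;\beta)$ for $E(Y\mid X,Z=z)$ and $Q_W(X,W,z;\delta)$ for $Q_0(X,W,z)=E(Y\mid X,W,Z=z)$. Assumption 3: either (i) $Q_X$ is covered by $Q_W$: for each $\beta$, the vector $\delta=(\beta^T,0^T)^T$ (appending zeros for the $W$-related parameters) satisfies $Q_W(X,W,z;\delta)=Q_X(X,z;\beta)$ (e.g. $Q_X=\beta_0+\beta_1Z+\beta_2^TX+\beta_3^TZX$, $Q_W=\delta_0+\delta_1Z+\delta_2^TX+\delta_3^TZX+\delta_4^TW+\delta_5^TZW$); or (ii) $Q_W$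 is correctly specified, i.e. $Q_W(X,W,z;\delta_0)=Q_0(X,W,z)$ for some $\delta_0$. Define $\varphi_X(Y,X,Z;\beta)=\frac{ZY}{e_0(X)}-\frac{(1-Z)Y}{1-e_0(X)}-\frac{Z-e_0(X)}{e_0(X)}Q_X(X,1;\beta)+\frac{e_0(X)-Z}{1-e_0(X)}Q_X(X,0;\beta)-\tau$ and $\varphi_W$ analogously with $Q_W(X,W,z;\delta)$ in place of $Q_X(X,z;\beta)$. Let $\Sigma^{\mathrm{fps}}_X(\beta)=\mathrm{var}\{\varphi_X(Y,X,Z;\beta)\}$ and $\Sigma^{\mathrm{fps}}_W(\delta)=\mathrm{var}\{\varphi_W(Y,X,W,Z;\delta)\}$ (these are the asymptotic variances of the doubly robust estimators with known propensity score and outcome parameter estimates converging to $\beta$, resp. $\delta$), and let $\beta^{\mathrm{fps}}$, $\delta^{\mathrm{fps}}$ be their minimizers. *)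

theory Defs
  imports "HOL-Probability.Probability"
begin

definition gen_sigma :: "'w measure \<Rightarrow> ('w \<Rightarrow> 'a) \<Rightarrow> 'a measure \<Rightarrow> 'w measure" where
  "gen_sigma M V MV = vimage_algebra (space M) V MV"

definition cond_indep ::
  "'w measure \<Rightarrow> ('w \<Rightarrow> 'x) \<Rightarrow> 'x measure \<Rightarrow> ('w \<Rightarrow> 'a) \<Rightarrow> 'a measure
     \<Rightarrow> ('w \<Rightarrow> 'b) \<Rightarrow> 'b measure \<Rightarrow> bool" where
  "cond_indep M V MV A MA B MB \<longleftrightarrow>
     (\<forall>SA\<in>sets MA. \<forall>SB\<in>sets MB. AE \<omega> in M.
        real_cond_exp M (gen_sigma M V MV)
          (\<lambda>u. indicator (A -` SA \<inter> space M) u * indicator (B -` SB \<inter> space M) u) \<omega>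
        = real_cond_exp M (gen_sigma M V MV) (indicator (A -` SA \<inter> space M)) \<omega>
          * real_cond_exp M (gen_sigma M V MV) (indicator (B -` SB \<inter> space M)) \<omega>)"

definition var_rv :: "'w measure \<Rightarrow> ('w \<Rightarrow> real) \<Rightarrow> real" where
  "var_rv M f = (\<integral>\<omega>. (f \<omega> - (\<integral>u. f u \<partial>M))\<^sup>2 \<partial>M)"

definition aipw :: "real \<Rightarrow> real \<Rightarrow> real \<Rightarrow> real \<Rightarrow> real \<Rightarrow> real \<Rightarrow> real" where
  "aipw e z y q1 q0 tau =
     z * y / e - (1 - z) * y / (1 - e) - (z - e) / e * q1 + (e - z) / (1 - e) * q0 - tau"

end

theory Submission
  imports Defs
begin


lemma gen_sigma_sfs:
  assumes "prob_space M" "V \<in> measurable M MV"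
  shows "sigma_finite_subalgebra M (gen_sigma M V MV)"
proof -
  interpret prob_space M by fact
  have "subalgebra M (gen_sigma M V MV)"
    unfolding subalgebra_def gen_sigma_def
    using sets_image_in_sets[OF refl assms(2)] by simp
  then have "finite_measure_subalgebra M (gen_sigma M V MV)"
    by (simp add: finite_measure_subalgebra_axioms_def finite_measure_subalgebra_def finite_measure_axioms)
  then show ?thesis by (rule finite_measure_subalgebra_is_sigma_finite)
qed

lemma gen_sigma_meas:
  assumes "V \<in> measurable M MV"
  shows "V \<in> measurable (gen_sigma M V MV) MV"
  unfolding gen_sigma_def
  by (rule measurable_vimage_algebra1) (use measurable_space[OF assms] in blast)

lemma dens_eq:
  fixes f h :: "'w \<Rightarrow> real"
  assumes M: "prob_space M"
    and X[measurable]: "X \<in> measurable M MX" and W[measurable]: "W \<in> measurable M MW"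
    and f[measurable]: "f \<in> borel_measurable M" and h[measurable]: "h \<in> borel_measurable M"
    and fnn: "AE \<omega> in M. 0 \<le> f \<omega>" and hnn: "AE \<omega> in M. 0 \<le> h \<omega>"
    and fi: "integrable M f" and hi: "integrable M h"
    and rect: "\<And>C B. C \<in> sets MX \<Longrightarrow> B \<in> sets MW \<Longrightarrow>
        (\<integral>\<omega>. f \<omega> * indicator C (X \<omega>) * indicator B (W \<omega>) \<partial>M)
      = (\<integral>\<omega>. h \<omega> * indicator C (X \<omega>) * indicator B (W \<omega>) \<partial>M)"
    and k[measurable]: "k \<in> borel_measurable (MX \<Otimes>\<^sub>M MW)"
  shows "integrable M (\<lambda>\<omega>. f \<omega> * k (X \<omega>, W \<omega>)) \<longleftrightarrow> integrable M (\<lambda>\<omega>. h \<omega> * k (X \<omega>, W \<omega>))"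
    and "(\<integral>\<omega>. f \<omega> * k (X \<omega>, W \<omega>) \<partial>M) = (\<integral>\<omega>. h \<omega> * k (X \<omega>, W \<omega>) \<partial>M)"
proof -
  interpret prob_space M by fact
  define N1 where "N1 = distr (density M f) (MX \<Otimes>\<^sub>M MW) (\<lambda>\<omega>. (X \<omega>, W \<omega>))"
  define N2 where "N2 = distr (density M h) (MX \<Otimes>\<^sub>M MW) (\<lambda>\<omega>. (X \<omega>, W \<omega>))"
  have XW[measurable]: "(\<lambda>\<omega>. (X \<omega>, W \<omega>)) \<in> measurable M (MX \<Otimes>\<^sub>M MW)" by measurable
  have em: "emeasure (distr (density M g) (MX \<Otimes>\<^sub>M MW) (\<lambda>\<omega>. (X \<omega>, W \<omega>))) (C \<times> B)
      = ennreal (\<integral>\<omega>. g \<omega> * indicator C (X \<omega>) * indicator B (W \<omega>) \<partial>M)"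
    if g[measurable]: "g \<in> borel_measurable M" and gnn: "AE \<omega> in M. 0 \<le> g \<omega>" and gi: "integrable M g"
      and C[measurable]: "C \<in> sets MX" and B[measurable]: "B \<in> sets MW" for g C B
  proof -
    have "emeasure (distr (density M g) (MX \<Otimes>\<^sub>M MW) (\<lambda>\<omega>. (X \<omega>, W \<omega>))) (C \<times> B)
        = emeasure (density M g) ((\<lambda>\<omega>. (X \<omega>, W \<omega>)) -` (C \<times> B) \<inter> space M)"
      by (subst emeasure_distr) auto
    also have "\<dots> = (\<integral>\<^sup>+\<omega>. ennreal (g \<omega>) * indicator ((\<lambda>\<omega>. (X \<omega>, W \<omega>)) -` (C \<times> B) \<inter> space M) \<omega> \<partial>M)"
      by (subst emeasure_density) auto
    also have "\<dots> = (\<integral>\<^sup>+\<omega>. ennreal (g \<omega> * indicator C (X \<omega>) * indicator B (W \<omega>)) \<partial>M)"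
      by (intro nn_integral_cong) (auto split: split_indicator)
    also have "\<dots> = ennreal (\<integral>\<omega>. g \<omega> * indicator C (X \<omega>) * indicator B (W \<omega>) \<partial>M)"
    proof (rule nn_integral_eq_integral)
      show "integrable M (\<lambda>\<omega>. g \<omega> * indicator C (X \<omega>) * indicator B (W \<omega>))"
        by (rule Bochner_Integration.integrable_bound[OF gi]) (auto split: split_indicator)
      show "AE \<omega> in M. 0 \<le> g \<omega> * indicator C (X \<omega>) * indicator B (W \<omega>)"
        using gnn by eventually_elim auto
    qed
    finally show ?thesis .
  qed
  have "N1 = N2"
  proof (rule measure_eqI_generator_eq[OF Int_stable_pair_measure_generator[of MX MW]])
    show "{a \<times> b |a b. a \<in> sets MX \<and> b \<in> sets MW} \<subseteq> Pow (space MX \<times> space MW)"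
      by (rule pair_measure_closed)
    show "sets N1 = sigma_sets (space MX \<times> space MW) {a \<times> b |a b. a \<in> sets MX \<and> b \<in> sets MW}"
      unfolding N1_def by (simp add: sets_pair_measure)
    show "sets N2 = sigma_sets (space MX \<times> space MW) {a \<times> b |a b. a \<in> sets MX \<and> b \<in> sets MW}"
      unfolding N2_def by (simp add: sets_pair_measure)
    fix S assume "S \<in> {a \<times> b |a b. a \<in> sets MX \<and> b \<in> sets MW}"
    then obtain C B where S: "S = C \<times> B" "C \<in> sets MX" "B \<in> sets MW" by blast
    show "emeasure N1 S = emeasure N2 S"
      unfolding N1_def N2_def S(1) em[OF f fnn fi S(2,3)] em[OF h hnn hi S(2,3)] rect[OF S(2,3)] ..
  next
    show "range (\<lambda>i. space MX \<times> space MW) \<subseteq> {a \<times> b |a b. a \<in> sets MX \<and> b \<in> sets MW}" by auto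
    show "(\<Union>i. space MX \<times> space MW) = space MX \<times> space MW" by simp
    fix i :: nat
    show "emeasure N1 (space MX \<times> space MW) \<noteq> \<infinity>"
      unfolding N1_def using em[OF f fnn fi sets.top sets.top] by simp
  qed
  have i1: "integrable N1 k \<longleftrightarrow> integrable M (\<lambda>\<omega>. f \<omega> * k (X \<omega>, W \<omega>))"
    unfolding N1_def by (simp add: integrable_distr_eq integrable_density fnn)
  have i2: "integrable N2 k \<longleftrightarrow> integrable M (\<lambda>\<omega>. h \<omega> * k (X \<omega>, W \<omega>))"
    unfolding N2_def by (simp add: integrable_distr_eq integrable_density hnn)
  have j1: "integral\<^sup>L N1 k = (\<integral>\<omega>. f \<omega> * k (X \<omega>, W \<omega>) \<partial>M)"
    unfolding N1_def by (simp add: integral_distr integral_density fnn)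
  have j2: "integral\<^sup>L N2 k = (\<integral>\<omega>. h \<omega> * k (X \<omega>, W \<omega>) \<partial>M)"
    unfolding N2_def by (simp add: integral_distr integral_density hnn)
  show "integrable M (\<lambda>\<omega>. f \<omega> * k (X \<omega>, W \<omega>)) \<longleftrightarrow> integrable M (\<lambda>\<omega>. h \<omega> * k (X \<omega>, W \<omega>))"
    using i1 i2 \<open>N1 = N2\<close> by simp
  show "(\<integral>\<omega>. f \<omega> * k (X \<omega>, W \<omega>) \<partial>M) = (\<integral>\<omega>. h \<omega> * k (X \<omega>, W \<omega>) \<partial>M)"
    using j1 j2 \<open>N1 = N2\<close> by simp
qed



lemma abs_le_sq: "\<bar>a::real\<bar> \<le> 1 + a\<^sup>2"
proof -
  have "0 \<le> (\<bar>a\<bar> - 1)\<^sup>2" by simp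
  then have "0 \<le> \<bar>a\<bar>\<^sup>2 - 2 * \<bar>a\<bar> + 1" unfolding power2_diff by simp
  moreover have "\<bar>a\<bar>\<^sup>2 = a\<^sup>2" by simp
  ultimately show ?thesis by linarith
qed

lemma abs_prod_le_sq: "\<bar>(a::real) * d\<bar> \<le> a\<^sup>2 + d\<^sup>2"
proof -
  have "0 \<le> (\<bar>a\<bar> - \<bar>d\<bar>)\<^sup>2" by simp
  then have "0 \<le> \<bar>a\<bar>\<^sup>2 - 2 * (\<bar>a\<bar> * \<bar>d\<bar>) + \<bar>d\<bar>\<^sup>2" unfolding power2_diff by simp
  moreover have "\<bar>a\<bar>\<^sup>2 = a\<^sup>2" "\<bar>d\<bar>\<^sup>2 = d\<^sup>2" "\<bar>a * d\<bar> = \<bar>a\<bar> * \<bar>d\<bar>" by (simp_all add: abs_mult)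
  moreover have "0 \<le> \<bar>a\<bar> * \<bar>d\<bar>" by simp
  ultimately show ?thesis by linarith
qed


lemma L2_imp_int:
  fixes A :: "'w \<Rightarrow> real"
  assumes "prob_space M" "A \<in> borel_measurable M" "integrable M (\<lambda>\<omega>. (A \<omega>)\<^sup>2)"
  shows "integrable M A"
proof -
  interpret prob_space M by fact
  have "integrable M (\<lambda>\<omega>. 1 + (A \<omega>)\<^sup>2)" using assms(3) by simp
  then show ?thesis
  proof (rule Bochner_Integration.integrable_bound)
    show "AE x in M. norm (A x) \<le> norm (1 + (A x)\<^sup>2)"
      using abs_le_sq by (simp add: add_nonneg_nonneg)
  qed (use assms in auto)
qed

lemma L2_prod:
  fixes A D :: "'w \<Rightarrow> real"
  assumes "A \<in> borel_measurable M" "D \<in> borel_measurable M"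
    "integrable M (\<lambda>\<omega>. (A \<omega>)\<^sup>2)" "integrable M (\<lambda>\<omega>. (D \<omega>)\<^sup>2)"
  shows "integrable M (\<lambda>\<omega>. A \<omega> * D \<omega>)"
proof -
  have "integrable M (\<lambda>\<omega>. (A \<omega>)\<^sup>2 + (D \<omega>)\<^sup>2)" using assms by simp
  then show ?thesis
  proof (rule Bochner_Integration.integrable_bound)
    show "AE x in M. norm (A x * D x) \<le> norm ((A x)\<^sup>2 + (D x)\<^sup>2)"
      using abs_prod_le_sq by (simp add: add_nonneg_nonneg)
  qed (use assms in auto)
qed

lemma L2_add:
  fixes A D :: "'w \<Rightarrow> real"
  assumes "A \<in> borel_measurable M" "D \<in> borel_measurable M"
    "integrable M (\<lambda>\<omega>. (A \<omega>)\<^sup>2)" "integrable M (\<lambda>\<omega>. (D \<omega>)\<^sup>2)"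
  shows "integrable M (\<lambda>\<omega>. (A \<omega> + D \<omega>)\<^sup>2)"
proof -
  have "integrable M (\<lambda>\<omega>. 2 * (A \<omega> * D \<omega>))" using L2_prod[OF assms] by simp
  then have "integrable M (\<lambda>\<omega>. (A \<omega>)\<^sup>2 + (D \<omega>)\<^sup>2 + 2 * (A \<omega> * D \<omega>))"
    using assms by (intro Bochner_Integration.integrable_add) auto
  then show ?thesis by (simp add: power2_sum mult.assoc)
qed

lemma var_le:
  fixes A D :: "'w \<Rightarrow> real"
  assumes M: "prob_space M" and [measurable]: "A \<in> borel_measurable M" "D \<in> borel_measurable M"
    and D2: "integrable M (\<lambda>\<omega>. (D \<omega>)\<^sup>2)" and D0: "(\<integral>\<omega>. D \<omega> \<partial>M) = 0"
    and orth: "integrable M (\<lambda>\<omega>. (A \<omega>)\<^sup>2) \<Longrightarrow> (\<integral>\<omega>. A \<omega> * D \<omega> \<partial>M) = 0"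
  shows "var_rv M A \<le> var_rv M (\<lambda>\<omega>. A \<omega> + D \<omega>)"
proof (cases "integrable M (\<lambda>\<omega>. (A \<omega>)\<^sup>2)")
  case True
  interpret prob_space M by fact
  have Ai: "integrable M A" by (rule L2_imp_int[OF M _ True]) simp
  have Di: "integrable M D" by (rule L2_imp_int[OF M _ D2]) simp
  have ADi: "integrable M (\<lambda>\<omega>. A \<omega> * D \<omega>)" by (rule L2_prod) (use True D2 in auto)
  define m where "m = (\<integral>\<omega>. A \<omega> \<partial>M)"
  have m2: "(\<integral>\<omega>. A \<omega> + D \<omega> \<partial>M) = m" using Ai Di D0 by (simp add: m_def)
  have "(\<lambda>\<omega>. (A \<omega> + D \<omega> - m)\<^sup>2) = (\<lambda>\<omega>. ((A \<omega> - m)\<^sup>2 + 2 * (A \<omega> * D \<omega>) - 2 * m * D \<omega>) + (D \<omega>)\<^sup>2)"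
    by (auto simp: power2_eq_square algebra_simps)
  moreover have i1: "integrable M (\<lambda>\<omega>. (A \<omega> - m)\<^sup>2)"
    using True Ai by (simp add: power2_diff)
  ultimately have "var_rv M (\<lambda>\<omega>. A \<omega> + D \<omega>) = var_rv M A + 2 * 0 - 2 * m * 0 + (\<integral>\<omega>. (D \<omega>)\<^sup>2 \<partial>M)"
    unfolding var_rv_def m2 using i1 ADi Di D2 D0 orth[OF True]
    by (simp add: m_def)
  moreover have "0 \<le> (\<integral>\<omega>. (D \<omega>)\<^sup>2 \<partial>M)" by simp
  ultimately show ?thesis by simp
next
  case False
  have "\<not> integrable M (\<lambda>\<omega>. (A \<omega> - c)\<^sup>2)" for c
  proof
    assume "integrable M (\<lambda>\<omega>. (A \<omega> - c)\<^sup>2)"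
    then have "integrable M (\<lambda>\<omega>. (A \<omega> - c + c)\<^sup>2)"
      by (intro L2_add) (auto intro: finite_measure.integrable_const[OF prob_space.finite_measure[OF M]])
    with False show False by simp
  qed
  then have "var_rv M A = 0" unfolding var_rv_def by (simp add: not_integrable_integral_eq)
  moreover have "0 \<le> var_rv M (\<lambda>\<omega>. A \<omega> + D \<omega>)" unfolding var_rv_def by simp
  ultimately show ?thesis by simp
qed

lemma rectZ:
  fixes Z :: "'w \<Rightarrow> real" and e0 :: "'x \<Rightarrow> real" and R :: "'w \<Rightarrow> 'r"
  assumes M: "prob_space M"
    and X[measurable]: "X \<in> measurable M MX" and W[measurable]: "W \<in> measurable M MW"
    and Z[measurable]: "Z \<in> borel_measurable M"
    and Z_bin: "\<And>\<omega>. \<omega> \<in> space M \<Longrightarrow> Z \<omega> = 0 \<or> Z \<omega> = 1"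
    and e0[measurable]: "e0 \<in> borel_measurable MX"
    and e0_def: "AE \<omega> in M. real_cond_exp M (gen_sigma M X MX) Z \<omega> = e0 (X \<omega>)"
    and A2: "cond_indep M X MX Z borel (\<lambda>\<omega>. (W \<omega>, R \<omega>)) (MW \<Otimes>\<^sub>M MR)"
    and MR: "space MR = UNIV"
    and C[measurable]: "C \<in> sets MX" and B[measurable]: "B \<in> sets MW"
  shows "(\<integral>\<omega>. Z \<omega> * indicator C (X \<omega>) * indicator B (W \<omega>) \<partial>M)
       = (\<integral>\<omega>. e0 (X \<omega>) * indicator C (X \<omega>) * indicator B (W \<omega>) \<partial>M)"
proof -
  interpret prob_space M by fact
  define F where "F = gen_sigma M X MX"
  interpret F: sigma_finite_subalgebra M F
    unfolding F_def by (rule gen_sigma_sfs[OF M X])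
  have XF[measurable]: "X \<in> measurable F MX" unfolding F_def by (rule gen_sigma_meas[OF X])
  define IZ :: "'w \<Rightarrow> real" where "IZ = indicator (Z -` {1} \<inter> space M)"
  define IW :: "'w \<Rightarrow> real" where "IW = indicator (W -` B \<inter> space M)"
  have [measurable]: "IZ \<in> borel_measurable M" "IW \<in> borel_measurable M"
    unfolding IZ_def IW_def by measurable
  have s2: "B \<times> space MR \<in> sets (MW \<Otimes>\<^sub>M MR)" by (intro pair_measureI) auto
  have s1: "{1::real} \<in> sets borel" by simp
  have pre: "(\<lambda>\<omega>. (W \<omega>, R \<omega>)) -` (B \<times> space MR) \<inter> space M = W -` B \<inter> space M"
    using MR by auto
  have ci: "AE \<omega> in M. real_cond_exp M F (\<lambda>u. IZ u * IW u) \<omega>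
      = real_cond_exp M F IZ \<omega> * real_cond_exp M F IW \<omega>"
    using A2[unfolded cond_indep_def, rule_format, OF s1 s2]
    by (simp only: pre F_def[symmetric] IZ_def[symmetric] IW_def[symmetric])
  have "AE \<omega> in M. real_cond_exp M F IZ \<omega> = real_cond_exp M F Z \<omega>"
    by (rule F.real_cond_exp_cong) (use Z_bin in \<open>auto simp: IZ_def intro!: AE_I2 split: split_indicator\<close>)
  with e0_def have cz: "AE \<omega> in M. real_cond_exp M F IZ \<omega> = e0 (X \<omega>)"
    unfolding F_def[symmetric] by eventually_elim simp
  have eint: "integrable M (\<lambda>\<omega>. e0 (X \<omega>))"
  proof -
    have int: "integrable M (real_cond_exp M F Z)"
      by (rule F.real_cond_exp_int(1)) (rule integrable_const_bound[where B=1], use Z_bin in \<open>force intro!: AE_I2\<close>, simp)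
    have ae: "AE \<omega> in M. real_cond_exp M F Z \<omega> = e0 (X \<omega>)" using e0_def by (simp add: F_def)
    show ?thesis by (rule integrable_cong_AE_imp[OF int _ ae]) simp
  qed
  have "(\<integral>\<omega>. Z \<omega> * indicator C (X \<omega>) * indicator B (W \<omega>) \<partial>M)
      = (\<integral>\<omega>. indicator C (X \<omega>) * (IZ \<omega> * IW \<omega>) \<partial>M)"
    by (rule Bochner_Integration.integral_cong[OF refl]) (use Z_bin in \<open>auto simp: IZ_def IW_def split: split_indicator\<close>)
  also have "\<dots> = (\<integral>\<omega>. indicator C (X \<omega>) * real_cond_exp M F (\<lambda>u. IZ u * IW u) \<omega> \<partial>M)"
    by (rule F.real_cond_exp_intg(2)[symmetric])
      (auto intro!: integrable_const_bound[where B=1] AE_I2 simp: IZ_def IW_def split: split_indicator)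
  also have "\<dots> = (\<integral>\<omega>. (indicator C (X \<omega>) * e0 (X \<omega>)) * real_cond_exp M F IW \<omega> \<partial>M)"
  proof (rule integral_cong_AE)
    show "AE \<omega> in M. indicator C (X \<omega>) * real_cond_exp M F (\<lambda>u. IZ u * IW u) \<omega>
        = (indicator C (X \<omega>) * e0 (X \<omega>)) * real_cond_exp M F IW \<omega>"
      using ci cz by eventually_elim simp
  qed auto
  also have "\<dots> = (\<integral>\<omega>. (indicator C (X \<omega>) * e0 (X \<omega>)) * IW \<omega> \<partial>M)"
  proof (rule F.real_cond_exp_intg(2))
    show "integrable M (\<lambda>\<omega>. indicator C (X \<omega>) * e0 (X \<omega>) * IW \<omega>)"
      by (rule Bochner_Integration.integrable_bound[OF eint]) (auto simp: IW_def split: split_indicator)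
  qed auto
  also have "\<dots> = (\<integral>\<omega>. e0 (X \<omega>) * indicator C (X \<omega>) * indicator B (W \<omega>) \<partial>M)"
    by (rule Bochner_Integration.integral_cong[OF refl]) (auto simp: IW_def split: split_indicator)
  finally show ?thesis .
qed



lemma conv_sq:
  fixes e x y :: real assumes "0 < e" "e < 1"
  shows "((1 - e) * x + e * y)\<^sup>2 \<le> x\<^sup>2 + y\<^sup>2"
proof -
  have "(1 - e) * x\<^sup>2 + e * y\<^sup>2 - ((1 - e) * x + e * y)\<^sup>2 = e * (1 - e) * (x - y)\<^sup>2"
    by (simp add: power2_eq_square algebra_simps)
  moreover have "0 \<le> e * (1 - e) * (x - y)\<^sup>2" using assms by simp
  moreover have "(1 - e) * x\<^sup>2 \<le> x\<^sup>2" "e * y\<^sup>2 \<le> y\<^sup>2"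
    using assms by (auto intro!: mult_left_le_one_le)
  ultimately show ?thesis by linarith
qed

lemma bnd_u:
  fixes e x y :: real assumes e: "0 < e" "e < 1"
  shows "e * (- ((1 - e) / e) * x - y)\<^sup>2 \<le> (x\<^sup>2 + y\<^sup>2) / (e * (1 - e))"
proof -
  have "- ((1 - e) / e) * x - y = - (((1 - e) * x + e * y) / e)" using e by (simp add: field_simps)
  then have "e * (- ((1 - e) / e) * x - y)\<^sup>2 * (e * (1 - e)) = e * (((1 - e) * x + e * y)\<^sup>2 / e\<^sup>2) * (e * (1 - e))"
    by (simp add: power_divide)
  also have "\<dots> = (1 - e) * ((1 - e) * x + e * y)\<^sup>2"
    using e by (simp add: power2_eq_square)
  also have "\<dots> \<le> ((1 - e) * x + e * y)\<^sup>2" using e by (intro mult_left_le_one_le) auto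
  also have "\<dots> \<le> x\<^sup>2 + y\<^sup>2" by (rule conv_sq[OF e])
  finally show ?thesis using e by (simp add: pos_le_divide_eq)
qed

lemma bnd_v:
  fixes e x y :: real assumes e: "0 < e" "e < 1"
  shows "(1 - e) * (x + (e / (1 - e)) * y)\<^sup>2 \<le> (x\<^sup>2 + y\<^sup>2) / (e * (1 - e))"
proof -
  have "x + (e / (1 - e)) * y = ((1 - e) * x + e * y) / (1 - e)" using e by (simp add: field_simps)
  then have "(1 - e) * (x + (e / (1 - e)) * y)\<^sup>2 * (e * (1 - e)) = (1 - e) * (((1 - e) * x + e * y)\<^sup>2 / (1 - e)\<^sup>2) * (e * (1 - e))"
    by (simp add: power_divide)
  also have "\<dots> = e * ((1 - e) * x + e * y)\<^sup>2"
    using e by (simp add: power2_eq_square)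
  also have "\<dots> \<le> ((1 - e) * x + e * y)\<^sup>2" using e by (intro mult_left_le_one_le) auto
  also have "\<dots> \<le> x\<^sup>2 + y\<^sup>2" by (rule conv_sq[OF e])
  finally show ?thesis using e by (simp add: pos_le_divide_eq)
qed

lemma diff_sq_le: "((a::real) - c)\<^sup>2 \<le> 2 * (a\<^sup>2 + c\<^sup>2)"
proof -
  have "2 * (a\<^sup>2 + c\<^sup>2) - (a - c)\<^sup>2 = (a + c)\<^sup>2" by (simp add: power2_eq_square algebra_simps)
  moreover have "0 \<le> (a + c)\<^sup>2" by simp
  ultimately show ?thesis by linarith
qed

lemma bnd_all:
  fixes e a1 c1 a0 c0 :: real assumes e: "0 < e" "e < 1"
  shows "e * (- ((1 - e) / e) * (a1 - c1) - (a0 - c0))\<^sup>2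
           \<le> 2 * (a1\<^sup>2 / (e * (1 - e)) + c1\<^sup>2 / (e * (1 - e)) + a0\<^sup>2 / (e * (1 - e)) + c0\<^sup>2 / (e * (1 - e)))"
    and "(1 - e) * ((a1 - c1) + (e / (1 - e)) * (a0 - c0))\<^sup>2
           \<le> 2 * (a1\<^sup>2 / (e * (1 - e)) + c1\<^sup>2 / (e * (1 - e)) + a0\<^sup>2 / (e * (1 - e)) + c0\<^sup>2 / (e * (1 - e)))"
proof -
  have p: "0 < e * (1 - e)" using e by simp
  have "((a1 - c1)\<^sup>2 + (a0 - c0)\<^sup>2) / (e * (1 - e)) \<le> (2 * (a1\<^sup>2 + c1\<^sup>2) + 2 * (a0\<^sup>2 + c0\<^sup>2)) / (e * (1 - e))"
    using p by (intro divide_right_mono add_mono diff_sq_le) auto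
  also have "\<dots> = 2 * (a1\<^sup>2 / (e * (1 - e)) + c1\<^sup>2 / (e * (1 - e)) + a0\<^sup>2 / (e * (1 - e)) + c0\<^sup>2 / (e * (1 - e)))"
    by (simp add: add_divide_distrib algebra_simps)
  finally have *: "((a1 - c1)\<^sup>2 + (a0 - c0)\<^sup>2) / (e * (1 - e)) \<le> \<dots>" .
  show "e * (- ((1 - e) / e) * (a1 - c1) - (a0 - c0))\<^sup>2 \<le> 2 * (a1\<^sup>2 / (e * (1 - e)) + c1\<^sup>2 / (e * (1 - e)) + a0\<^sup>2 / (e * (1 - e)) + c0\<^sup>2 / (e * (1 - e)))"
    using bnd_u[OF e, of "a1 - c1" "a0 - c0"] * by linarith
  show "(1 - e) * ((a1 - c1) + (e / (1 - e)) * (a0 - c0))\<^sup>2 \<le> 2 * (a1\<^sup>2 / (e * (1 - e)) + c1\<^sup>2 / (e * (1 - e)) + a0\<^sup>2 / (e * (1 - e)) + c0\<^sup>2 / (e * (1 - e)))"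
    using bnd_v[OF e, of "a1 - c1" "a0 - c0"] * by linarith
qed

lemma sq_le_weighted:
  fixes e a :: real assumes e: "0 < e" "e < 1"
  shows "a\<^sup>2 \<le> a\<^sup>2 / (e * (1 - e))"
proof -
  have "e * (1 - e) \<le> 1" using e by (simp add: algebra_simps) (smt (verit) mult_le_cancel_left1 mult_pos_pos)
  then show ?thesis using e by (simp add: le_divide_eq mult_le_cancel_left1 mult_left_le)
qed

lemma scaled_sq_le:
  fixes e u :: real assumes e: "0 < e" "e \<le> 1"
  shows "(e * u)\<^sup>2 \<le> e * u\<^sup>2"
proof -
  have "(e * u)\<^sup>2 = e * (e * u\<^sup>2)" by (simp add: power2_eq_square)
  also have "\<dots> \<le> e * u\<^sup>2" using e by (simp add: mult_le_cancel_right1 mult_left_le_one_le)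
  finally show ?thesis .
qed


lemma var_rv_cong_AE:
  assumes [measurable]: "f \<in> borel_measurable M" "g \<in> borel_measurable M"
    and ae: "AE \<omega> in M. f \<omega> = g \<omega>"
  shows "var_rv M f = var_rv M g"
proof -
  have i: "(\<integral>\<omega>. f \<omega> \<partial>M) = (\<integral>\<omega>. g \<omega> \<partial>M)" by (rule integral_cong_AE) (use ae in auto)
  show ?thesis unfolding var_rv_def i
    by (rule integral_cong_AE) (use ae in \<open>auto elim!: eventually_mono\<close>)
qed



lemma aipw_diff:
  "aipw e z y a1 a0 t - aipw e z y c1 c0 t = - ((z - e) / e) * (a1 - c1) + ((e - z) / (1 - e)) * (a0 - c0)"
proof -
  have "\<And>P Q :: real. (z * y / e - (1 - z) * y / (1 - e) - P * a1 + Q * a0 - t)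
     - (z * y / e - (1 - z) * y / (1 - e) - P * c1 + Q * c0 - t) = - P * (a1 - c1) + Q * (a0 - c0)"
    by (simp add: algebra_simps)
  from this[of "(z - e) / e" "(e - z) / (1 - e)"] show ?thesis unfolding aipw_def .
qed

lemma R1a:
  fixes e f y c1 c0 t :: real
  assumes "e \<noteq> 0" "f \<noteq> 0" "e = 1 - f"
  shows "1 * y / e - (1 - 1) * y / f - (1 - e) / e * c1 + (e - 1) / f * c0 - t
       = (y - (1 * c1 + (1 - 1) * c0)) * (1 / e - (1 - 1) / f) + (c1 - c0) - t"
proof -
  have f: "f = 1 - e" using assms(3) by simp
  show ?thesis using assms(1,2) apply (simp add: field_simps) apply (simp add: f algebra_simps)
    done
qed

lemma R0a:
  fixes e f y c1 c0 t :: real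
  assumes "e \<noteq> 0" "f \<noteq> 0" "e = 1 - f"
  shows "0 * y / e - (1 - 0) * y / f - (0 - e) / e * c1 + (e - 0) / f * c0 - t
       = (y - (0 * c1 + (1 - 0) * c0)) * (0 / e - (1 - 0) / f) + (c1 - c0) - t"
proof -
  have f: "f = 1 - e" using assms(3) by simp
  show ?thesis using assms(1,2) apply (simp add: field_simps) apply (simp add: f algebra_simps)
    done
qed

lemma U1a:
  fixes e f x y :: real
  assumes "e \<noteq> 0" "f \<noteq> 0" "e = 1 - f"
  shows "- ((1 - e) / e) * x + ((e - 1) / f) * y = - ((1 - e) / e) * x - y"
proof -
  have f: "f = 1 - e" using assms(3) by simp
  show ?thesis using assms(1,2) apply (simp add: field_simps) apply (simp add: f algebra_simps)
    done
qed

lemma sum0_lemma: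
  fixes e x y :: real
  assumes e: "e \<noteq> 0" "e \<noteq> 1"
  shows "e * (- ((1 - e) / e) * x - y) + (1 - e) * (x + (e / (1 - e)) * y) = 0"
proof -
  have e1: "1 - e \<noteq> 0" using e by simp
  have "e * (- ((1 - e) / e) * x - y) = - ((1 - e) * x) - e * y" using e by (simp add: field_simps)
  moreover have "(1 - e) * (x + (e / (1 - e)) * y) = (1 - e) * x + e * y" using e1 by (simp add: field_simps)
  ultimately show ?thesis by (simp add: algebra_simps)
qed

lemma aipw_decomp:
  fixes e z y a1 a0 c1 c0 t :: real
  assumes e: "e \<noteq> 0" "e \<noteq> 1" and z: "z = 0 \<or> z = 1"
  shows "aipw e z y a1 a0 t = aipw e z y c1 c0 t
     + (z * (- ((1 - e) / e) * (a1 - c1) - (a0 - c0)) + (1 - z) * ((a1 - c1) + (e / (1 - e)) * (a0 - c0)))"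
  using z
proof
  assume z0: "z = 0"
  have "aipw e z y a1 a0 t - aipw e z y c1 c0 t = (a1 - c1) + (e / (1 - e)) * (a0 - c0)"
    using aipw_diff[of e z y a1 a0 t c1 c0] e z0 by simp
  then show ?thesis using z0 by simp
next
  assume z1: "z = 1"
  have "aipw e z y a1 a0 t - aipw e z y c1 c0 t = - ((1 - e) / e) * (a1 - c1) - (a0 - c0)"
    using aipw_diff[of e z y a1 a0 t c1 c0] U1a[of e "1 - e" "a1 - c1" "a0 - c0"] e z1 by simp
  then show ?thesis using z1 by simp
qed

lemma aipw_R:
  fixes e z y c1 c0 t :: real
  assumes e: "e \<noteq> 0" "e \<noteq> 1" and z: "z = 0 \<or> z = 1"
  shows "aipw e z y c1 c0 t = (y - (z * c1 + (1 - z) * c0)) * (z / e - (1 - z) / (1 - e)) + (c1 - c0) - t"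
  using z
proof
  assume z0: "z = 0"
  show ?thesis using R0a[of e "1 - e" y c1 c0 t] e unfolding aipw_def z0 by simp
next
  assume z1: "z = 1"
  show ?thesis using R1a[of e "1 - e" y c1 c0 t] e unfolding aipw_def z1 by simp
qed

theorem theorem2:
  fixes M :: "'w measure"
    and Y Z Y0 Y1 :: "'w \<Rightarrow> real"
    and X :: "'w \<Rightarrow> 'x" and MX :: "'x measure"
    and W :: "'w \<Rightarrow> 'v" and MW :: "'v measure"
    and e0 :: "'x \<Rightarrow> real"
    and eX :: "'x \<Rightarrow> 'pa \<Rightarrow> real"
    and eW :: "'x \<Rightarrow> 'v \<Rightarrow> 'pa \<Rightarrow> 'pg::zero \<Rightarrow> real"
    and \<alpha>s :: 'pa and \<gamma>s :: 'pg
    and QX :: "'x \<Rightarrow> real \<Rightarrow> 'pb \<Rightarrow> real"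
    and QW :: "'x \<Rightarrow> 'v \<Rightarrow> real \<Rightarrow> 'pd \<Rightarrow> real"
    and Q0 :: "'x \<Rightarrow> 'v \<Rightarrow> real \<Rightarrow> real"
    and \<tau> :: real
    and \<beta>fps :: 'pb and \<delta>fps :: 'pd
  assumes M: "prob_space M"
    and meas_X: "X \<in> measurable M MX"
    and meas_W: "W \<in> measurable M MW"
    and meas_Z: "Z \<in> borel_measurable M"
    and meas_Y0: "Y0 \<in> borel_measurable M"
    and meas_Y1: "Y1 \<in> borel_measurable M"
    and Z_bin: "\<And>\<omega>. \<omega> \<in> space M \<Longrightarrow> Z \<omega> = 0 \<or> Z \<omega> = 1"
    and Y_def: "\<And>\<omega>. \<omega> \<in> space M \<Longrightarrow> Y \<omega> = Z \<omega> * Y1 \<omega> + (1 - Z \<omega>) * Y0 \<omega>"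
    and int_Y0: "integrable M Y0" and int_Y1: "integrable M Y1"
    and tau_def: "\<tau> = (\<integral>\<omega>. Y1 \<omega> - Y0 \<omega> \<partial>M)"
    \<comment> \<open>propensity score e0(X) = Pr(Z = 1 | X)\<close>
    and meas_e0: "e0 \<in> borel_measurable MX"
    and e0_def: "AE \<omega> in M. real_cond_exp M (gen_sigma M X MX) Z \<omega> = e0 (X \<omega>)"
    \<comment> \<open>Assumption 1\<close>
    and A1_indep: "cond_indep M X MX Z borel (\<lambda>\<omega>. (Y0 \<omega>, Y1 \<omega>)) (borel \<Otimes>\<^sub>M borel)"
    and A1_overlap: "AE \<omega> in M. 0 < e0 (X \<omega>) \<and> e0 (X \<omega>) < 1"
    \<comment> \<open>Assumption 2\<close>
    and A2: "cond_indep M X MX Z borel (\<lambda>\<omega>. (W \<omega>, Y0 \<omega>, Y1 \<omega>)) (MW \<Otimes>\<^sub>M (borel \<Otimes>\<^sub>M borel))"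
    \<comment> \<open>propensity models, nested, and propensity score fully known\<close>
    and eW_nest: "\<And>x w \<alpha>. eW x w \<alpha> 0 = eX x \<alpha>"
    and ps_known: "AE \<omega> in M. e0 (X \<omega>) = eX (X \<omega>) \<alpha>s \<and> eX (X \<omega>) \<alpha>s = eW (X \<omega>) (W \<omega>) \<alpha>s \<gamma>s"
    \<comment> \<open>Q0(X,W,z) = E(Y | X, W, Z = z)\<close>
    and meas_Q0: "\<And>z. (\<lambda>(x, w). Q0 x w z) \<in> borel_measurable (MX \<Otimes>\<^sub>M MW)"
    and Q0_def: "AE \<omega> in M. real_cond_exp M
                   (gen_sigma M (\<lambda>u. (X u, W u, Z u)) (MX \<Otimes>\<^sub>M (MW \<Otimes>\<^sub>M borel))) Y \<omega>
                 = Q0 (X \<omega>) (W \<omega>) (Z \<omega>)"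
    \<comment> \<open>regularity of the working models (finiteness of the variances)\<close>
    and meas_QX: "\<And>z \<beta>. (\<lambda>x. QX x z \<beta>) \<in> borel_measurable MX"
    and meas_QW: "\<And>z \<delta>. (\<lambda>(x, w). QW x w z \<delta>) \<in> borel_measurable (MX \<Otimes>\<^sub>M MW)"
    and L2_Y: "integrable M (\<lambda>\<omega>. (Y \<omega>)\<^sup>2 / (e0 (X \<omega>) * (1 - e0 (X \<omega>))))"
    and L2_QX: "\<And>z \<beta>. z \<in> {0, 1} \<Longrightarrow>
                 integrable M (\<lambda>\<omega>. (QX (X \<omega>) z \<beta>)\<^sup>2 / (e0 (X \<omega>) * (1 - e0 (X \<omega>))))"
    and L2_QW: "\<And>z \<delta>. z \<in> {0, 1} \<Longrightarrow>
                 integrable M (\<lambda>\<omega>. (QW (X \<omega>) (W \<omega>) z \<delta>)\<^sup>2 / (e0 (X \<omega>) * (1 - e0 (X \<omega>))))"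
    \<comment> \<open>Assumption 3\<close>
    and A3: "(\<forall>\<beta>. \<exists>\<delta>. \<forall>x w z. QW x w z \<delta> = QX x z \<beta>)
             \<or> (\<exists>\<delta>0. \<forall>z\<in>{0, 1}. AE \<omega> in M. QW (X \<omega>) (W \<omega>) z \<delta>0 = Q0 (X \<omega>) (W \<omega>) z)"
    \<comment> \<open>beta_fps, delta_fps minimise the asymptotic variances\<close>
    and \<beta>fps_min: "\<And>\<beta>. var_rv M (\<lambda>\<omega>. aipw (e0 (X \<omega>)) (Z \<omega>) (Y \<omega>) (QX (X \<omega>) 1 \<beta>fps) (QX (X \<omega>) 0 \<beta>fps) \<tau>)
                      \<le> var_rv M (\<lambda>\<omega>. aipw (e0 (X \<omega>)) (Z \<omega>) (Y \<omega>) (QX (X \<omega>) 1 \<beta>) (QX (X \<omega>) 0 \<beta>) \<tau>)"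
    and \<delta>fps_min: "\<And>\<delta>. var_rv M (\<lambda>\<omega>. aipw (e0 (X \<omega>)) (Z \<omega>) (Y \<omega>) (QW (X \<omega>) (W \<omega>) 1 \<delta>fps) (QW (X \<omega>) (W \<omega>) 0 \<delta>fps) \<tau>)
                      \<le> var_rv M (\<lambda>\<omega>. aipw (e0 (X \<omega>)) (Z \<omega>) (Y \<omega>) (QW (X \<omega>) (W \<omega>) 1 \<delta>) (QW (X \<omega>) (W \<omega>) 0 \<delta>) \<tau>)"
  shows "var_rv M (\<lambda>\<omega>. aipw (e0 (X \<omega>)) (Z \<omega>) (Y \<omega>) (QW (X \<omega>) (W \<omega>) 1 \<delta>fps) (QW (X \<omega>) (W \<omega>) 0 \<delta>fps) \<tau>)
         \<le> var_rv M (\<lambda>\<omega>. aipw (e0 (X \<omega>)) (Z \<omega>) (Y \<omega>) (QX (X \<omega>) 1 \<beta>fps) (QX (X \<omega>) 0 \<beta>fps) \<tau>)"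
proof -
  interpret P: prob_space M by (rule M)
  note [measurable] = meas_X meas_W meas_Z meas_Y0 meas_Y1 meas_e0 meas_QX
  have mQW[measurable]: "\<And>z d. (\<lambda>p. QW (fst p) (snd p) z d) \<in> borel_measurable (MX \<Otimes>\<^sub>M MW)"
    using meas_QW by (simp add: case_prod_beta')
  have mQ0[measurable]: "\<And>z. (\<lambda>p. Q0 (fst p) (snd p) z) \<in> borel_measurable (MX \<Otimes>\<^sub>M MW)"
    using meas_Q0 by (simp add: case_prod_beta')
  have mQWN: "\<And>N z d. X \<in> measurable N MX \<Longrightarrow> W \<in> measurable N MW \<Longrightarrow> (\<lambda>\<omega>. QW (X \<omega>) (W \<omega>) z d) \<in> borel_measurable N"
    using measurable_compose[OF measurable_Pair mQW] by simp
  have mQWM[measurable]: "\<And>z d. (\<lambda>\<omega>. QW (X \<omega>) (W \<omega>) z d) \<in> borel_measurable M"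
    by (rule mQWN) simp_all
  have Ymeas[measurable]: "Y \<in> borel_measurable M"
  proof -
    have "Y \<in> borel_measurable M \<longleftrightarrow> (\<lambda>\<omega>. Z \<omega> * Y1 \<omega> + (1 - Z \<omega>) * Y0 \<omega>) \<in> borel_measurable M"
      by (rule measurable_cong) (rule Y_def)
    then show ?thesis by simp
  qed
  from A3 show ?thesis
  proof
    assume "\<forall>\<beta>. \<exists>\<delta>. \<forall>x w z. QW x w z \<delta> = QX x z \<beta>"
    then obtain \<delta> where "\<forall>x w z. QW x w z \<delta> = QX x z \<beta>fps" by blast
    then show ?thesis using \<delta>fps_min[of \<delta>] by simp
  next
    assume "\<exists>\<delta>0. \<forall>z\<in>{0, 1}. AE \<omega> in M. QW (X \<omega>) (W \<omega>) z \<delta>0 = Q0 (X \<omega>) (W \<omega>) z"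
    then obtain \<delta>0 where c0: "\<forall>z\<in>{0, 1}. AE \<omega> in M. QW (X \<omega>) (W \<omega>) z \<delta>0 = Q0 (X \<omega>) (W \<omega>) z"
      by blast
    define A where "A = (\<lambda>\<omega>. aipw (e0 (X \<omega>)) (Z \<omega>) (Y \<omega>) (QW (X \<omega>) (W \<omega>) 1 \<delta>0) (QW (X \<omega>) (W \<omega>) 0 \<delta>0) \<tau>)"
    define B where "B = (\<lambda>\<omega>. aipw (e0 (X \<omega>)) (Z \<omega>) (Y \<omega>) (QX (X \<omega>) 1 \<beta>fps) (QX (X \<omega>) 0 \<beta>fps) \<tau>)"
    have "var_rv M A \<le> var_rv M B"
    proof -
      have ae_e: "AE \<omega> in M. 0 < e0 (X \<omega>) \<and> e0 (X \<omega>) < 1" by (rule A1_overlap)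
      have Zb: "\<And>\<omega>. \<omega> \<in> space M \<Longrightarrow> Z \<omega> = 0 \<or> Z \<omega> = 1" by (rule Z_bin)
      define uu where "uu = (\<lambda>p. - ((1 - e0 (fst p)) / e0 (fst p)) * (QX (fst p) 1 \<beta>fps - QW (fst p) (snd p) 1 \<delta>0)
                                  - (QX (fst p) 0 \<beta>fps - QW (fst p) (snd p) 0 \<delta>0))"
      define vv where "vv = (\<lambda>p. (QX (fst p) 1 \<beta>fps - QW (fst p) (snd p) 1 \<delta>0)
                                  + (e0 (fst p) / (1 - e0 (fst p))) * (QX (fst p) 0 \<beta>fps - QW (fst p) (snd p) 0 \<delta>0))"
      define SS where "SS = (\<lambda>p. QW (fst p) (snd p) 1 \<delta>0 - QW (fst p) (snd p) 0 \<delta>0)"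
      have [measurable]: "uu \<in> borel_measurable (MX \<Otimes>\<^sub>M MW)" "vv \<in> borel_measurable (MX \<Otimes>\<^sub>M MW)"
        "SS \<in> borel_measurable (MX \<Otimes>\<^sub>M MW)"
        unfolding uu_def vv_def SS_def by measurable
      define D where "D = (\<lambda>\<omega>. Z \<omega> * uu (X \<omega>, W \<omega>) + (1 - Z \<omega>) * vv (X \<omega>, W \<omega>))"
      have [measurable]: "A \<in> borel_measurable M" "B \<in> borel_measurable M" "D \<in> borel_measurable M"
        unfolding A_def B_def D_def aipw_def by measurable
      have Zint: "integrable M Z"
        by (rule P.integrable_const_bound[where B=1]) (use Zb in \<open>force intro!: AE_I2\<close>, simp)
      have eint: "integrable M (\<lambda>\<omega>. e0 (X \<omega>))"
      proof -
        interpret F: sigma_finite_subalgebra M "gen_sigma M X MX" by (rule gen_sigma_sfs[OF M meas_X])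
        have int: "integrable M (real_cond_exp M (gen_sigma M X MX) Z)"
          by (rule F.real_cond_exp_int(1)[OF Zint])
        show ?thesis by (rule integrable_cong_AE_imp[OF int _ e0_def]) simp
      qed
      have rect1: "\<And>C B. C \<in> sets MX \<Longrightarrow> B \<in> sets MW \<Longrightarrow>
          (\<integral>\<omega>. Z \<omega> * indicator C (X \<omega>) * indicator B (W \<omega>) \<partial>M)
        = (\<integral>\<omega>. e0 (X \<omega>) * indicator C (X \<omega>) * indicator B (W \<omega>) \<partial>M)"
        by (rule rectZ[OF M meas_X meas_W meas_Z Z_bin meas_e0 e0_def A2])
          (simp_all add: space_pair_measure)
      have rect0: "(\<integral>\<omega>. (1 - Z \<omega>) * indicator C (X \<omega>) * indicator B (W \<omega>) \<partial>M)
        = (\<integral>\<omega>. (1 - e0 (X \<omega>)) * indicator C (X \<omega>) * indicator B (W \<omega>) \<partial>M)"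
        if C[measurable]: "C \<in> sets MX" and B[measurable]: "B \<in> sets MW" for C B
      proof -
        have i1: "integrable M (\<lambda>\<omega>. indicator C (X \<omega>) * indicator B (W \<omega>) :: real)"
          by (rule P.integrable_const_bound[where B=1]) (auto intro!: AE_I2 split: split_indicator)
        have i2: "integrable M (\<lambda>\<omega>. Z \<omega> * indicator C (X \<omega>) * indicator B (W \<omega>))"
          by (rule Bochner_Integration.integrable_bound[OF Zint]) (auto split: split_indicator)
        have i3: "integrable M (\<lambda>\<omega>. e0 (X \<omega>) * indicator C (X \<omega>) * indicator B (W \<omega>))"
          by (rule Bochner_Integration.integrable_bound[OF eint]) (auto split: split_indicator)
        have "(\<integral>\<omega>. (1 - Z \<omega>) * indicator C (X \<omega>) * indicator B (W \<omega>) \<partial>M)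
            = (\<integral>\<omega>. indicator C (X \<omega>) * indicator B (W \<omega>) - Z \<omega> * indicator C (X \<omega>) * indicator B (W \<omega>) \<partial>M)"
          by (simp add: algebra_simps)
        also have "\<dots> = (\<integral>\<omega>. indicator C (X \<omega>) * indicator B (W \<omega>) \<partial>M) - (\<integral>\<omega>. Z \<omega> * indicator C (X \<omega>) * indicator B (W \<omega>) \<partial>M)"
          using i1 i2 by simp
        also have "\<dots> = (\<integral>\<omega>. indicator C (X \<omega>) * indicator B (W \<omega>) \<partial>M) - (\<integral>\<omega>. e0 (X \<omega>) * indicator C (X \<omega>) * indicator B (W \<omega>) \<partial>M)"
          using rect1[OF C B] by simp
        also have "\<dots> = (\<integral>\<omega>. indicator C (X \<omega>) * indicator B (W \<omega>) - e0 (X \<omega>) * indicator C (X \<omega>) * indicator B (W \<omega>) \<partial>M)"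
          using i1 i3 by simp
        also have "\<dots> = (\<integral>\<omega>. (1 - e0 (X \<omega>)) * indicator C (X \<omega>) * indicator B (W \<omega>) \<partial>M)"
          by (simp add: algebra_simps)
        finally show ?thesis .
      qed
      have Znn: "AE \<omega> in M. 0 \<le> Z \<omega>" "AE \<omega> in M. 0 \<le> 1 - Z \<omega>"
        using Zb by (force intro!: AE_I2)+
      have enn1: "AE \<omega> in M. 0 \<le> e0 (X \<omega>)"
        using ae_e by eventually_elim simp
      have enn2: "AE \<omega> in M. 0 \<le> 1 - e0 (X \<omega>)"
        using ae_e by eventually_elim simp
      have Z1int: "integrable M (\<lambda>\<omega>. 1 - Z \<omega>)" using Zint by simp
      have e1int: "integrable M (\<lambda>\<omega>. 1 - e0 (X \<omega>))" using eint by simp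
      have em1: "(\<lambda>\<omega>. e0 (X \<omega>)) \<in> borel_measurable M" by measurable
      have em2: "(\<lambda>\<omega>. 1 - e0 (X \<omega>)) \<in> borel_measurable M" by measurable
      have zm2: "(\<lambda>\<omega>. 1 - Z \<omega>) \<in> borel_measurable M" by measurable
      have DZ: "integrable M (\<lambda>\<omega>. Z \<omega> * k (X \<omega>, W \<omega>)) \<longleftrightarrow> integrable M (\<lambda>\<omega>. e0 (X \<omega>) * k (X \<omega>, W \<omega>))"
          "(\<integral>\<omega>. Z \<omega> * k (X \<omega>, W \<omega>) \<partial>M) = (\<integral>\<omega>. e0 (X \<omega>) * k (X \<omega>, W \<omega>) \<partial>M)"
        if "k \<in> borel_measurable (MX \<Otimes>\<^sub>M MW)" for k
        using dens_eq[OF M meas_X meas_W meas_Z em1 Znn(1) enn1 Zint eint rect1 that] by blast+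
      have D1Z: "integrable M (\<lambda>\<omega>. (1 - Z \<omega>) * k (X \<omega>, W \<omega>)) \<longleftrightarrow> integrable M (\<lambda>\<omega>. (1 - e0 (X \<omega>)) * k (X \<omega>, W \<omega>))"
          "(\<integral>\<omega>. (1 - Z \<omega>) * k (X \<omega>, W \<omega>) \<partial>M) = (\<integral>\<omega>. (1 - e0 (X \<omega>)) * k (X \<omega>, W \<omega>) \<partial>M)"
        if "k \<in> borel_measurable (MX \<Otimes>\<^sub>M MW)" for k
        using dens_eq[OF M meas_X meas_W zm2 em2 Znn(2) enn2 Z1int e1int rect0 that] by blast+
      define G where "G = (\<lambda>\<omega>. 2 * ((QX (X \<omega>) 1 \<beta>fps)\<^sup>2 / (e0 (X \<omega>) * (1 - e0 (X \<omega>)))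
          + (QW (X \<omega>) (W \<omega>) 1 \<delta>0)\<^sup>2 / (e0 (X \<omega>) * (1 - e0 (X \<omega>)))
          + (QX (X \<omega>) 0 \<beta>fps)\<^sup>2 / (e0 (X \<omega>) * (1 - e0 (X \<omega>)))
          + (QW (X \<omega>) (W \<omega>) 0 \<delta>0)\<^sup>2 / (e0 (X \<omega>) * (1 - e0 (X \<omega>)))))"
      have Gint: "integrable M G"
        unfolding G_def by (intro integrable_mult_right Bochner_Integration.integrable_add L2_QX L2_QW) auto
      have Gnn: "AE \<omega> in M. 0 \<le> G \<omega>"
        using ae_e by eventually_elim (simp add: G_def)
      have nm: "\<And>a b :: real. 0 \<le> a \<Longrightarrow> a \<le> b \<Longrightarrow> norm a \<le> norm b" by auto
      have BAD: "AE \<omega> in M. B \<omega> = A \<omega> + D \<omega>"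
        using ae_e AE_space
      proof eventually_elim
        case (elim \<omega>)
        then have e: "e0 (X \<omega>) \<noteq> 0" "e0 (X \<omega>) \<noteq> 1" and sp: "\<omega> \<in> space M" by auto
        show ?case unfolding A_def B_def D_def uu_def vv_def
          using aipw_decomp[OF e Zb[OF sp], of "Y \<omega>" "QX (X \<omega>) 1 \<beta>fps" "QX (X \<omega>) 0 \<beta>fps" \<tau>
              "QW (X \<omega>) (W \<omega>) 1 \<delta>0" "QW (X \<omega>) (W \<omega>) 0 \<delta>0"] by simp
      qed
      have Pu2: "AE \<omega> in M. (e0 (X \<omega>) * uu (X \<omega>, W \<omega>))\<^sup>2 \<le> G \<omega>
                   \<and> e0 (X \<omega>) * (uu (X \<omega>, W \<omega>))\<^sup>2 \<le> G \<omega> \<and> 0 \<le> e0 (X \<omega>) * (uu (X \<omega>, W \<omega>))\<^sup>2"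
        using ae_e
      proof eventually_elim
        case (elim \<omega>)
        then have e: "0 < e0 (X \<omega>)" "e0 (X \<omega>) < 1" by auto
        have a: "(e0 (X \<omega>) * uu (X \<omega>, W \<omega>))\<^sup>2 \<le> e0 (X \<omega>) * (uu (X \<omega>, W \<omega>))\<^sup>2"
          by (rule scaled_sq_le) (use e in auto)
        have b: "e0 (X \<omega>) * (uu (X \<omega>, W \<omega>))\<^sup>2 \<le> G \<omega>"
          using bnd_all(1)[OF e, of "QX (X \<omega>) 1 \<beta>fps" "QW (X \<omega>) (W \<omega>) 1 \<delta>0" "QX (X \<omega>) 0 \<beta>fps" "QW (X \<omega>) (W \<omega>) 0 \<delta>0"]
          unfolding uu_def G_def by simp
        have c: "0 \<le> e0 (X \<omega>) * (uu (X \<omega>, W \<omega>))\<^sup>2" using e by simp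
        show ?case using a b c by linarith
      qed
      have Qv2: "AE \<omega> in M. ((1 - e0 (X \<omega>)) * vv (X \<omega>, W \<omega>))\<^sup>2 \<le> G \<omega>
                   \<and> (1 - e0 (X \<omega>)) * (vv (X \<omega>, W \<omega>))\<^sup>2 \<le> G \<omega> \<and> 0 \<le> (1 - e0 (X \<omega>)) * (vv (X \<omega>, W \<omega>))\<^sup>2"
        using ae_e
      proof eventually_elim
        case (elim \<omega>)
        then have e: "0 < e0 (X \<omega>)" "e0 (X \<omega>) < 1" by auto
        have a: "((1 - e0 (X \<omega>)) * vv (X \<omega>, W \<omega>))\<^sup>2 \<le> (1 - e0 (X \<omega>)) * (vv (X \<omega>, W \<omega>))\<^sup>2"
          by (rule scaled_sq_le) (use e in auto)
        have b: "(1 - e0 (X \<omega>)) * (vv (X \<omega>, W \<omega>))\<^sup>2 \<le> G \<omega>"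
          using bnd_all(2)[OF e, of "QX (X \<omega>) 1 \<beta>fps" "QW (X \<omega>) (W \<omega>) 1 \<delta>0" "QX (X \<omega>) 0 \<beta>fps" "QW (X \<omega>) (W \<omega>) 0 \<delta>0"]
          unfolding vv_def G_def by simp
        have c: "0 \<le> (1 - e0 (X \<omega>)) * (vv (X \<omega>, W \<omega>))\<^sup>2" using e by simp
        show ?case using a b c by linarith
      qed
      have eu2int: "integrable M (\<lambda>\<omega>. e0 (X \<omega>) * (uu (X \<omega>, W \<omega>))\<^sup>2)"
        by (rule Bochner_Integration.integrable_bound[OF Gint], measurable, use Pu2 in \<open>eventually_elim, auto intro!: nm\<close>)
      have ev2int: "integrable M (\<lambda>\<omega>. (1 - e0 (X \<omega>)) * (vv (X \<omega>, W \<omega>))\<^sup>2)"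
        by (rule Bochner_Integration.integrable_bound[OF Gint], measurable, use Qv2 in \<open>eventually_elim, auto intro!: nm\<close>)
      have P2int: "integrable M (\<lambda>\<omega>. (e0 (X \<omega>) * uu (X \<omega>, W \<omega>))\<^sup>2)"
        by (rule Bochner_Integration.integrable_bound[OF Gint], measurable, use Pu2 in \<open>eventually_elim, auto intro!: nm\<close>)
      have Q2int: "integrable M (\<lambda>\<omega>. ((1 - e0 (X \<omega>)) * vv (X \<omega>, W \<omega>))\<^sup>2)"
        by (rule Bochner_Integration.integrable_bound[OF Gint], measurable, use Qv2 in \<open>eventually_elim, auto intro!: nm\<close>)
      have Pint: "integrable M (\<lambda>\<omega>. e0 (X \<omega>) * uu (X \<omega>, W \<omega>))"
        by (rule L2_imp_int[OF M _ P2int]) simp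
      have Qint: "integrable M (\<lambda>\<omega>. (1 - e0 (X \<omega>)) * vv (X \<omega>, W \<omega>))"
        by (rule L2_imp_int[OF M _ Q2int]) simp
      have Zu2int: "integrable M (\<lambda>\<omega>. Z \<omega> * (uu (X \<omega>, W \<omega>))\<^sup>2)"
        using DZ(1)[of "\<lambda>p. (uu p)\<^sup>2"] eu2int by simp
      have Zv2int: "integrable M (\<lambda>\<omega>. (1 - Z \<omega>) * (vv (X \<omega>, W \<omega>))\<^sup>2)"
        using D1Z(1)[of "\<lambda>p. (vv p)\<^sup>2"] ev2int by simp
      have Zuint: "integrable M (\<lambda>\<omega>. Z \<omega> * uu (X \<omega>, W \<omega>))"
        using DZ(1)[of uu] Pint by simp
      have Zvint: "integrable M (\<lambda>\<omega>. (1 - Z \<omega>) * vv (X \<omega>, W \<omega>))"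
        using D1Z(1)[of vv] Qint by simp
      have D2: "integrable M (\<lambda>\<omega>. (D \<omega>)\<^sup>2)"
      proof -
        have "integrable M (\<lambda>\<omega>. Z \<omega> * (uu (X \<omega>, W \<omega>))\<^sup>2 + (1 - Z \<omega>) * (vv (X \<omega>, W \<omega>))\<^sup>2)"
          using Zu2int Zv2int by (rule Bochner_Integration.integrable_add)
        moreover have "integrable M (\<lambda>\<omega>. (D \<omega>)\<^sup>2) \<longleftrightarrow>
            integrable M (\<lambda>\<omega>. Z \<omega> * (uu (X \<omega>, W \<omega>))\<^sup>2 + (1 - Z \<omega>) * (vv (X \<omega>, W \<omega>))\<^sup>2)"
          by (rule Bochner_Integration.integrable_cong[OF refl]) (auto dest!: Zb simp: D_def)
        ultimately show ?thesis by simp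
      qed
      have Dint: "integrable M D"
        unfolding D_def using Zuint Zvint by (rule Bochner_Integration.integrable_add)
      have sum0: "AE \<omega> in M. e0 (X \<omega>) * uu (X \<omega>, W \<omega>) + (1 - e0 (X \<omega>)) * vv (X \<omega>, W \<omega>) = 0"
        using ae_e
      proof eventually_elim
        case (elim \<omega>)
        then have e: "e0 (X \<omega>) \<noteq> 0" "1 - e0 (X \<omega>) \<noteq> 0" by auto
        then show ?case unfolding uu_def vv_def by (simp add: field_simps)
      qed
      have D0: "(\<integral>\<omega>. D \<omega> \<partial>M) = 0"
      proof -
        have "(\<integral>\<omega>. D \<omega> \<partial>M) = (\<integral>\<omega>. Z \<omega> * uu (X \<omega>, W \<omega>) \<partial>M) + (\<integral>\<omega>. (1 - Z \<omega>) * vv (X \<omega>, W \<omega>) \<partial>M)"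
          unfolding D_def using Zuint Zvint by simp
        also have "\<dots> = (\<integral>\<omega>. e0 (X \<omega>) * uu (X \<omega>, W \<omega>) \<partial>M) + (\<integral>\<omega>. (1 - e0 (X \<omega>)) * vv (X \<omega>, W \<omega>) \<partial>M)"
          using DZ(2)[of uu] D1Z(2)[of vv] by simp
        also have "\<dots> = (\<integral>\<omega>. e0 (X \<omega>) * uu (X \<omega>, W \<omega>) + (1 - e0 (X \<omega>)) * vv (X \<omega>, W \<omega>) \<partial>M)"
          using Pint Qint by simp
        also have "\<dots> = (\<integral>\<omega>. 0 \<partial>M)"
          by (rule integral_cong_AE) (use sum0 in auto)
        finally show ?thesis by simp
      qed
      have "var_rv M B = var_rv M (\<lambda>\<omega>. A \<omega> + D \<omega>)"
        by (rule var_rv_cong_AE) (use BAD in auto)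
      moreover have "var_rv M A \<le> var_rv M (\<lambda>\<omega>. A \<omega> + D \<omega>)"
      proof (rule var_le[OF M _ _ D2 D0])
        assume A2sq: "integrable M (\<lambda>\<omega>. (A \<omega>)\<^sup>2)"
        have L2W: "integrable M (\<lambda>\<omega>. (QW (X \<omega>) (W \<omega>) z \<delta>0)\<^sup>2)" if z: "z \<in> {0, 1}" for z
        proof (rule Bochner_Integration.integrable_bound[OF L2_QW[OF z, of \<delta>0]])
          show "AE \<omega> in M. norm ((QW (X \<omega>) (W \<omega>) z \<delta>0)\<^sup>2)
              \<le> norm ((QW (X \<omega>) (W \<omega>) z \<delta>0)\<^sup>2 / (e0 (X \<omega>) * (1 - e0 (X \<omega>))))"
            using ae_e
          proof eventually_elim
            case (elim \<omega>)
            then have e: "0 < e0 (X \<omega>)" "e0 (X \<omega>) < 1" by auto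
            show ?case by (rule nm) (simp, rule sq_le_weighted[OF e])
          qed
        qed simp
        have IW: "integrable M (\<lambda>\<omega>. QW (X \<omega>) (W \<omega>) z \<delta>0)" if z: "z \<in> {0, 1}" for z
          by (rule L2_imp_int[OF M _ L2W[OF z]]) simp
        have S2: "integrable M (\<lambda>\<omega>. (SS (X \<omega>, W \<omega>))\<^sup>2)"
        proof -
          have "integrable M (\<lambda>\<omega>. (QW (X \<omega>) (W \<omega>) 1 \<delta>0 + - QW (X \<omega>) (W \<omega>) 0 \<delta>0)\<^sup>2)"
            by (rule L2_add) (use L2W[of 1] L2W[of 0] in auto)
          then show ?thesis by (simp add: SS_def)
        qed
        define R where "R = (\<lambda>\<omega>. (Y \<omega> - (Z \<omega> * QW (X \<omega>) (W \<omega>) 1 \<delta>0 + (1 - Z \<omega>) * QW (X \<omega>) (W \<omega>) 0 \<delta>0))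
                                  * (Z \<omega> / e0 (X \<omega>) - (1 - Z \<omega>) / (1 - e0 (X \<omega>))))"
        have [measurable]: "R \<in> borel_measurable M" unfolding R_def by measurable
        have ARS: "AE \<omega> in M. A \<omega> = R \<omega> + SS (X \<omega>, W \<omega>) - \<tau>"
          using ae_e AE_space
        proof eventually_elim
          case (elim \<omega>)
          then have e: "e0 (X \<omega>) \<noteq> 0" "e0 (X \<omega>) \<noteq> 1" and sp: "\<omega> \<in> space M" by auto
          show ?case unfolding A_def R_def SS_def
            using aipw_R[OF e Zb[OF sp], of "Y \<omega>" "QW (X \<omega>) (W \<omega>) 1 \<delta>0" "QW (X \<omega>) (W \<omega>) 0 \<delta>0" \<tau>] by simp
        qed
        have R2: "integrable M (\<lambda>\<omega>. (R \<omega>)\<^sup>2)"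
        proof -
          have m2: "integrable M (\<lambda>\<omega>. (- SS (X \<omega>, W \<omega>))\<^sup>2)" using S2 by simp
          have "integrable M (\<lambda>\<omega>. (\<tau> + - SS (X \<omega>, W \<omega>))\<^sup>2)"
            using L2_add[of "\<lambda>\<omega>. \<tau>" M "\<lambda>\<omega>. - SS (X \<omega>, W \<omega>)"] m2 by simp
          then have m3: "integrable M (\<lambda>\<omega>. (\<tau> - SS (X \<omega>, W \<omega>))\<^sup>2)" by simp
          have "integrable M (\<lambda>\<omega>. (A \<omega> + (\<tau> - SS (X \<omega>, W \<omega>)))\<^sup>2)"
            using L2_add[of A M "\<lambda>\<omega>. \<tau> - SS (X \<omega>, W \<omega>)"] m3 A2sq by simp
          then show ?thesis
            by (rule integrable_cong_AE_imp) (use ARS in \<open>auto elim!: eventually_mono\<close>)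
        qed
        have RDint: "integrable M (\<lambda>\<omega>. R \<omega> * D \<omega>)" by (rule L2_prod) (use R2 D2 in auto)
        have SDint: "integrable M (\<lambda>\<omega>. SS (X \<omega>, W \<omega>) * D \<omega>)" by (rule L2_prod) (use S2 D2 in auto)
        have SD0: "(\<integral>\<omega>. SS (X \<omega>, W \<omega>) * D \<omega> \<partial>M) = 0"
        proof -
          have i1: "integrable M (\<lambda>\<omega>. e0 (X \<omega>) * (SS (X \<omega>, W \<omega>) * uu (X \<omega>, W \<omega>)))"
            using L2_prod[of "\<lambda>\<omega>. SS (X \<omega>, W \<omega>)" M "\<lambda>\<omega>. e0 (X \<omega>) * uu (X \<omega>, W \<omega>)"] S2 P2int
            by (simp add: mult_ac)
          have i2: "integrable M (\<lambda>\<omega>. (1 - e0 (X \<omega>)) * (SS (X \<omega>, W \<omega>) * vv (X \<omega>, W \<omega>)))"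
            using L2_prod[of "\<lambda>\<omega>. SS (X \<omega>, W \<omega>)" M "\<lambda>\<omega>. (1 - e0 (X \<omega>)) * vv (X \<omega>, W \<omega>)"] S2 Q2int
            by (simp add: mult_ac)
          have j1: "integrable M (\<lambda>\<omega>. Z \<omega> * (SS (X \<omega>, W \<omega>) * uu (X \<omega>, W \<omega>)))"
            using DZ(1)[of "\<lambda>p. SS p * uu p"] i1 by simp
          have j2: "integrable M (\<lambda>\<omega>. (1 - Z \<omega>) * (SS (X \<omega>, W \<omega>) * vv (X \<omega>, W \<omega>)))"
            using D1Z(1)[of "\<lambda>p. SS p * vv p"] i2 by simp
          have "(\<integral>\<omega>. SS (X \<omega>, W \<omega>) * D \<omega> \<partial>M)
              = (\<integral>\<omega>. Z \<omega> * (SS (X \<omega>, W \<omega>) * uu (X \<omega>, W \<omega>)) + (1 - Z \<omega>) * (SS (X \<omega>, W \<omega>) * vv (X \<omega>, W \<omega>)) \<partial>M)"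
            by (rule Bochner_Integration.integral_cong[OF refl]) (simp add: D_def algebra_simps)
          also have "\<dots> = (\<integral>\<omega>. Z \<omega> * (SS (X \<omega>, W \<omega>) * uu (X \<omega>, W \<omega>)) \<partial>M)
              + (\<integral>\<omega>. (1 - Z \<omega>) * (SS (X \<omega>, W \<omega>) * vv (X \<omega>, W \<omega>)) \<partial>M)"
            using j1 j2 by simp
          also have "\<dots> = (\<integral>\<omega>. e0 (X \<omega>) * (SS (X \<omega>, W \<omega>) * uu (X \<omega>, W \<omega>)) \<partial>M)
              + (\<integral>\<omega>. (1 - e0 (X \<omega>)) * (SS (X \<omega>, W \<omega>) * vv (X \<omega>, W \<omega>)) \<partial>M)"
            using DZ(2)[of "\<lambda>p. SS p * uu p"] D1Z(2)[of "\<lambda>p. SS p * vv p"] by simp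
          also have "\<dots> = (\<integral>\<omega>. e0 (X \<omega>) * (SS (X \<omega>, W \<omega>) * uu (X \<omega>, W \<omega>))
              + (1 - e0 (X \<omega>)) * (SS (X \<omega>, W \<omega>) * vv (X \<omega>, W \<omega>)) \<partial>M)"
            using i1 i2 by simp
          also have "\<dots> = (\<integral>\<omega>. 0 \<partial>M)"
          proof (rule integral_cong_AE)
            show "AE \<omega> in M. e0 (X \<omega>) * (SS (X \<omega>, W \<omega>) * uu (X \<omega>, W \<omega>))
              + (1 - e0 (X \<omega>)) * (SS (X \<omega>, W \<omega>) * vv (X \<omega>, W \<omega>)) = 0"
              using sum0
            proof eventually_elim
              case (elim \<omega>)
              have "e0 (X \<omega>) * (SS (X \<omega>, W \<omega>) * uu (X \<omega>, W \<omega>))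
                  + (1 - e0 (X \<omega>)) * (SS (X \<omega>, W \<omega>) * vv (X \<omega>, W \<omega>))
                  = SS (X \<omega>, W \<omega>) * (e0 (X \<omega>) * uu (X \<omega>, W \<omega>) + (1 - e0 (X \<omega>)) * vv (X \<omega>, W \<omega>))"
                by (simp add: algebra_simps)
              then show ?case using elim by simp
            qed
          qed simp_all
          finally show ?thesis by simp
        qed
        \<comment> \<open>orthogonality of the residual part, via E(Y | X, W, Z) = Q0(X, W, Z)\<close>
        have RD0: "(\<integral>\<omega>. R \<omega> * D \<omega> \<partial>M) = 0"
        proof -
          define F3 where "F3 = gen_sigma M (\<lambda>u. (X u, W u, Z u)) (MX \<Otimes>\<^sub>M (MW \<Otimes>\<^sub>M borel))"
          have XWZ: "(\<lambda>u. (X u, W u, Z u)) \<in> measurable M (MX \<Otimes>\<^sub>M (MW \<Otimes>\<^sub>M borel))" by measurable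
          interpret F3: sigma_finite_subalgebra M F3
            unfolding F3_def by (rule gen_sigma_sfs[OF M XWZ])
          have m3: "(\<lambda>u. (X u, W u, Z u)) \<in> measurable F3 (MX \<Otimes>\<^sub>M (MW \<Otimes>\<^sub>M borel))"
            unfolding F3_def by (rule gen_sigma_meas[OF XWZ])
          have XF3[measurable]: "X \<in> measurable F3 MX"
            using measurable_compose[OF m3 measurable_fst] by simp
          have WF3[measurable]: "W \<in> measurable F3 MW"
            using measurable_compose[OF m3 measurable_compose[OF measurable_snd measurable_fst]] by simp
          have ZF3[measurable]: "Z \<in> borel_measurable F3"
            using measurable_compose[OF m3 measurable_compose[OF measurable_snd measurable_snd]] by simp
          have QWF3[measurable]: "\<And>z d. (\<lambda>\<omega>. QW (X \<omega>) (W \<omega>) z d) \<in> borel_measurable F3"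
            by (rule mQWN[OF XF3 WF3])
          define hh where "hh = (\<lambda>\<omega>. Z \<omega> * uu (X \<omega>, W \<omega>) / e0 (X \<omega>) - (1 - Z \<omega>) * vv (X \<omega>, W \<omega>) / (1 - e0 (X \<omega>)))"
          define cZ where "cZ = (\<lambda>\<omega>. Z \<omega> * QW (X \<omega>) (W \<omega>) 1 \<delta>0 + (1 - Z \<omega>) * QW (X \<omega>) (W \<omega>) 0 \<delta>0)"
          have hhF3[measurable]: "hh \<in> borel_measurable F3" unfolding hh_def by measurable
          have cZF3[measurable]: "cZ \<in> borel_measurable F3" unfolding cZ_def by measurable
          have hhM[measurable]: "hh \<in> borel_measurable M" unfolding hh_def by measurable
          have cZM[measurable]: "cZ \<in> borel_measurable M" unfolding cZ_def by measurable
          have Yint: "integrable M Y"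
          proof (rule Bochner_Integration.integrable_bound[of M "\<lambda>\<omega>. \<bar>Y1 \<omega>\<bar> + \<bar>Y0 \<omega>\<bar>"])
            show "integrable M (\<lambda>\<omega>. \<bar>Y1 \<omega>\<bar> + \<bar>Y0 \<omega>\<bar>)" using int_Y0 int_Y1 by simp
            show "AE \<omega> in M. norm (Y \<omega>) \<le> norm (\<bar>Y1 \<omega>\<bar> + \<bar>Y0 \<omega>\<bar>)"
            proof (rule AE_I2)
              fix \<omega> assume sp: "\<omega> \<in> space M"
              from Zb[OF sp] show "norm (Y \<omega>) \<le> norm (\<bar>Y1 \<omega>\<bar> + \<bar>Y0 \<omega>\<bar>)"
                using Y_def[OF sp] by auto
            qed
          qed simp
          have cZint: "integrable M cZ"
          proof (rule Bochner_Integration.integrable_bound[of M "\<lambda>\<omega>. \<bar>QW (X \<omega>) (W \<omega>) 1 \<delta>0\<bar> + \<bar>QW (X \<omega>) (W \<omega>) 0 \<delta>0\<bar>"])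
            show "integrable M (\<lambda>\<omega>. \<bar>QW (X \<omega>) (W \<omega>) 1 \<delta>0\<bar> + \<bar>QW (X \<omega>) (W \<omega>) 0 \<delta>0\<bar>)"
              using IW[of 1] IW[of 0] by simp
            show "AE \<omega> in M. norm (cZ \<omega>) \<le> norm (\<bar>QW (X \<omega>) (W \<omega>) 1 \<delta>0\<bar> + \<bar>QW (X \<omega>) (W \<omega>) 0 \<delta>0\<bar>)"
            proof (rule AE_I2)
              fix \<omega> assume sp: "\<omega> \<in> space M"
              from Zb[OF sp] show "norm (cZ \<omega>) \<le> norm (\<bar>QW (X \<omega>) (W \<omega>) 1 \<delta>0\<bar> + \<bar>QW (X \<omega>) (W \<omega>) 0 \<delta>0\<bar>)"
                unfolding cZ_def by auto
            qed
          qed simp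
          have gmeas[measurable]: "(\<lambda>\<omega>. Y \<omega> - cZ \<omega>) \<in> borel_measurable M" by measurable
          have hg: "integrable M (\<lambda>\<omega>. hh \<omega> * (Y \<omega> - cZ \<omega>))"
          proof -
            have "integrable M (\<lambda>\<omega>. R \<omega> * D \<omega>) \<longleftrightarrow> integrable M (\<lambda>\<omega>. hh \<omega> * (Y \<omega> - cZ \<omega>))"
            proof (rule Bochner_Integration.integrable_cong[OF refl])
              fix \<omega> assume sp: "\<omega> \<in> space M"
              from Zb[OF sp] show "R \<omega> * D \<omega> = hh \<omega> * (Y \<omega> - cZ \<omega>)"
                unfolding R_def D_def hh_def cZ_def by auto
            qed
            then show ?thesis using RDint by simp
          qed
          have RDhh: "(\<integral>\<omega>. R \<omega> * D \<omega> \<partial>M) = (\<integral>\<omega>. hh \<omega> * (Y \<omega> - cZ \<omega>) \<partial>M)"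
          proof (rule Bochner_Integration.integral_cong[OF refl])
            fix \<omega> assume sp: "\<omega> \<in> space M"
            from Zb[OF sp] show "R \<omega> * D \<omega> = hh \<omega> * (Y \<omega> - cZ \<omega>)"
              unfolding R_def D_def hh_def cZ_def by auto
          qed
          also have "\<dots> = (\<integral>\<omega>. hh \<omega> * real_cond_exp M F3 (\<lambda>\<omega>. Y \<omega> - cZ \<omega>) \<omega> \<partial>M)"
            by (rule F3.real_cond_exp_intg(2)[symmetric, OF hg hhF3 gmeas])
          also have "\<dots> = (\<integral>\<omega>. 0 \<partial>M)"
          proof (rule integral_cong_AE)
            have d: "AE \<omega> in M. real_cond_exp M F3 (\<lambda>\<omega>. Y \<omega> - cZ \<omega>) \<omega>
                = real_cond_exp M F3 Y \<omega> - real_cond_exp M F3 cZ \<omega>"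
              by (rule F3.real_cond_exp_diff[OF Yint cZint])
            have q: "AE \<omega> in M. real_cond_exp M F3 Y \<omega> = Q0 (X \<omega>) (W \<omega>) (Z \<omega>)"
              using Q0_def unfolding F3_def .
            have f: "AE \<omega> in M. real_cond_exp M F3 cZ \<omega> = cZ \<omega>"
              by (rule F3.real_cond_exp_F_meas[OF cZint cZF3])
            have a1: "AE \<omega> in M. QW (X \<omega>) (W \<omega>) 1 \<delta>0 = Q0 (X \<omega>) (W \<omega>) 1" using c0 by simp
            have a0: "AE \<omega> in M. QW (X \<omega>) (W \<omega>) 0 \<delta>0 = Q0 (X \<omega>) (W \<omega>) 0" using c0 by simp
            show "AE \<omega> in M. hh \<omega> * real_cond_exp M F3 (\<lambda>\<omega>. Y \<omega> - cZ \<omega>) \<omega> = 0"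
              using d q f a1 a0 AE_space
            proof eventually_elim
              case (elim \<omega>)
              from Zb[OF elim(6)] have "Q0 (X \<omega>) (W \<omega>) (Z \<omega>) = cZ \<omega>"
                using elim(4,5) unfolding cZ_def by auto
              then show ?case using elim(1,2,3) by simp
            qed
          next
            show "(\<lambda>\<omega>. hh \<omega> * real_cond_exp M F3 (\<lambda>\<omega>. Y \<omega> - cZ \<omega>) \<omega>) \<in> borel_measurable M"
              using hhM borel_measurable_cond_exp2 by (rule borel_measurable_times)
          qed simp
          finally show ?thesis by simp
        qed
        have "(\<integral>\<omega>. A \<omega> * D \<omega> \<partial>M) = (\<integral>\<omega>. R \<omega> * D \<omega> + SS (X \<omega>, W \<omega>) * D \<omega> - \<tau> * D \<omega> \<partial>M)"
        proof (rule integral_cong_AE)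
          show "AE \<omega> in M. A \<omega> * D \<omega> = R \<omega> * D \<omega> + SS (X \<omega>, W \<omega>) * D \<omega> - \<tau> * D \<omega>"
            using ARS
          proof eventually_elim
            case (elim \<omega>)
            show ?case unfolding elim by (simp add: algebra_simps)
          qed
        qed simp_all
        also have "\<dots> = (\<integral>\<omega>. R \<omega> * D \<omega> \<partial>M) + (\<integral>\<omega>. SS (X \<omega>, W \<omega>) * D \<omega> \<partial>M) - \<tau> * (\<integral>\<omega>. D \<omega> \<partial>M)"
          using RDint SDint Dint by simp
        finally show "(\<integral>\<omega>. A \<omega> * D \<omega> \<partial>M) = 0" using RD0 SD0 D0 by simp
      qed simp_all
      ultimately show ?thesis by simp
    qed
    then show ?thesis using \<delta>fps_min[of \<delta>0] unfolding A_def B_def by linarith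
  qed
qed

end
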